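(* Let $G$ be a group and $\rho,\phi,\psi\in H^1(G;\mathbb{F}_2)$. Let $K=\mathrm{Ker}(\rho)$ and $L=K\cap\mathrm{Ker}(\phi)$. Then: (2) the canonical projections induce isomorphisms $H^1(G/X^2(K);\mathbb{F}_2)\cong H^1(G/X^2(L);\mathbb{F}_2)\cong H^1(G/X^4(G);\mathbb{F}_2)\cong H^1(G;\mathbb{F}_2)$; (3) $\rho\phi=0$ in $H^2(G;\mathbb{F}_2)$ if and only if $\rho\phi=0$ in $H^2(G/X^2(K);\mathbb{F}_2)$; (4) $\phi^2=\rho\phi+\rho\psi$ in $H^2(G;\mathbb{F}_2)$ if and only if $\phi^2=\rho\phi+\rho\psi$ in $H^2(G/X^2(L);\mathbb{F}_2)$.
   Context: For a group $H$, $X^n(H)=\langle h^n\mid h\in H\rangle$ is the subgroup generated by all $n$-th powers. In (3) and (4), classes in $H^1$ of the quotient groups are identified with classes in $H^1(G;\mathbb{F}_2)$ via the isomorphisms of (2). Products are cup products. *)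

theory Defs
  imports "HOL-Algebra.Algebra"
begin

text \<open>F_2 is modelled by bool: addition is exclusive or (\<noteq>), multiplication is conjunction.
Group cohomology with trivial F_2 coefficients is computed from the standard (bar) cochain complex.\<close>

definition Xpow :: "('a, 'b) monoid_scheme \<Rightarrow> nat \<Rightarrow> 'a set \<Rightarrow> 'a set" where
  "Xpow G n H = generate G {h [^]\<^bsub>G\<^esub> n | h. h \<in> H}"

text \<open>H^1(G;F_2) = Hom(G, F_2) (1-cocycles; the 1-coboundaries are zero for trivial coefficients),
represented as extensional functions on the carrier.\<close>
definition H1 :: "('a, 'b) monoid_scheme \<Rightarrow> ('a \<Rightarrow> bool) set" where
  "H1 G = {f. f \<in> extensional (carrier G) \<and>
              (\<forall>x\<in>carrier G. \<forall>y\<in>carrier G. f (x \<otimes>\<^bsub>G\<^esub> y) = (f x \<noteq> f y))}"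

definition ker1 :: "('a, 'b) monoid_scheme \<Rightarrow> ('a \<Rightarrow> bool) \<Rightarrow> 'a set" where
  "ker1 G f = {x \<in> carrier G. f x = False}"

definition infl :: "('a, 'b) monoid_scheme \<Rightarrow> 'a set \<Rightarrow> ('a set \<Rightarrow> bool) \<Rightarrow> ('a \<Rightarrow> bool)" where
  "infl G N f = restrict (\<lambda>x. f (N #>\<^bsub>G\<^esub> x)) (carrier G)"

definition cup :: "('a \<Rightarrow> bool) \<Rightarrow> ('a \<Rightarrow> bool) \<Rightarrow> ('a \<Rightarrow> 'a \<Rightarrow> bool)" where
  "cup a b = (\<lambda>x y. a x \<and> b y)"

definition add2 :: "('a \<Rightarrow> 'a \<Rightarrow> bool) \<Rightarrow> ('a \<Rightarrow> 'a \<Rightarrow> bool) \<Rightarrow> ('a \<Rightarrow> 'a \<Rightarrow> bool)" where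
  "add2 c d = (\<lambda>x y. c x y \<noteq> d x y)"

text \<open>A 2-cochain is a coboundary: c(x,y) = f(x) + f(y) - f(xy) for some 1-cochain f (signs irrelevant over F_2).
Equality of the classes of two 2-cocycles in H^2(G;F_2) means their difference is a coboundary.\<close>
definition coboundary2 :: "('a, 'b) monoid_scheme \<Rightarrow> ('a \<Rightarrow> 'a \<Rightarrow> bool) \<Rightarrow> bool" where
  "coboundary2 G c = (\<exists>f. \<forall>x\<in>carrier G. \<forall>y\<in>carrier G.
       c x y = ((f x \<noteq> f y) \<noteq> f (x \<otimes>\<^bsub>G\<^esub> y)))"

definition H2_eq :: "('a, 'b) monoid_scheme \<Rightarrow> ('a \<Rightarrow> 'a \<Rightarrow> bool) \<Rightarrow> ('a \<Rightarrow> 'a \<Rightarrow> bool) \<Rightarrow> bool" where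
  "H2_eq G c d = coboundary2 G (add2 c d)"

end

theory Submission
  imports Defs
begin


context group begin

lemma H1_hom: "f \<in> H1 G \<Longrightarrow> x \<in> carrier G \<Longrightarrow> y \<in> carrier G \<Longrightarrow> f (x \<otimes> y) = (f x \<noteq> f y)"
  by (simp add: H1_def)

lemma H1_one: "f \<in> H1 G \<Longrightarrow> f \<one> = False"
  using H1_hom[of f \<one> \<one>] by auto

lemma H1_inv: "f \<in> H1 G \<Longrightarrow> x \<in> carrier G \<Longrightarrow> f (inv x) = f x"
  using H1_hom[of f x "inv x"] H1_one[of f] by auto

lemma H1_pow: "f \<in> H1 G \<Longrightarrow> x \<in> carrier G \<Longrightarrow> f (x [^] (n::nat)) = (odd n \<and> f x)"
proof (induction n)
  case 0 then show ?case using H1_one by simp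
next
  case (Suc n) then show ?case by (simp add: H1_hom) blast
qed

lemma ker1_normal: assumes "f \<in> H1 G" shows "ker1 G f \<lhd> G"
proof (rule normal_invI)
  show "subgroup (ker1 G f) G"
    by (rule subgroupI) (auto simp: ker1_def H1_hom[OF assms] H1_inv[OF assms] H1_one[OF assms])
next
  fix x h assume "x \<in> carrier G" "h \<in> ker1 G f"
  then show "x \<otimes> h \<otimes> inv x \<in> ker1 G f"
    by (auto simp: ker1_def H1_hom[OF assms] H1_inv[OF assms])
qed

lemma inv_cancel_l: "x \<in> carrier G \<Longrightarrow> z \<in> carrier G \<Longrightarrow> inv x \<otimes> (x \<otimes> z) = z"
  by (metis l_inv l_one m_assoc inv_closed)

lemma conj_pow: "x \<in> carrier G \<Longrightarrow> g \<in> carrier G \<Longrightarrow> (x \<otimes> g \<otimes> inv x) [^] (n::nat) = x \<otimes> g [^] n \<otimes> inv x"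
proof (induction n)
  case 0 then show ?case by simp
next
  case (Suc n)
  have "(x \<otimes> g \<otimes> inv x) [^] Suc n = (x \<otimes> g [^] n \<otimes> inv x) \<otimes> (x \<otimes> g \<otimes> inv x)"
    using Suc by simp
  also have "\<dots> = x \<otimes> (g [^] n \<otimes> g) \<otimes> inv x" using Suc.prems by (simp add: m_assoc inv_cancel_l)
  finally show ?case by simp
qed

lemma sub_pow: "subgroup S G \<Longrightarrow> g \<in> S \<Longrightarrow> g [^] (n::nat) \<in> S"
proof (induction n)
  case 0 then show ?case by (simp add: subgroup.one_closed)
next
  case (Suc n) then show ?case by (simp add: subgroup.m_closed)
qed

lemma Xpow_sub: "subgroup S G \<Longrightarrow> Xpow G k S \<subseteq> S"
  unfolding Xpow_def by (rule generate_subgroup_incl) (use sub_pow in blast)+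

lemma Xpow_normal: assumes "S \<lhd> G" shows "Xpow G k S \<lhd> G"
proof -
  have sub: "subgroup S G" using assms normal_imp_subgroup by blast
  define Hs where "Hs = {h [^] k | h. h \<in> S}"
  have Hc: "Hs \<subseteq> carrier G"
    unfolding Hs_def using sub_pow[OF sub] subgroup.mem_carrier[OF sub] by auto
  have cj: "x \<otimes> g \<otimes> inv x \<in> S" if "x \<in> carrier G" "g \<in> S" for x g
    using normal_invE(2)[OF assms] that by blast
  show ?thesis unfolding Xpow_def Hs_def[symmetric]
  proof (rule normal_invI)
    show "subgroup (generate G Hs) G" by (rule generate_is_subgroup[OF Hc])
  next
    fix x h assume x: "x \<in> carrier G" and h: "h \<in> generate G Hs"
    from h show "x \<otimes> h \<otimes> inv x \<in> generate G Hs"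
    proof (induction rule: generate.induct)
      case one 
      have "x \<otimes> \<one> \<otimes> inv x = \<one>" using x by simp
      then show ?case by (simp add: generate.one)
    next
      case (incl h)
      then obtain g where g: "g \<in> S" "h = g [^] k" unfolding Hs_def by auto
      have gc: "g \<in> carrier G" using subgroup.mem_carrier[OF sub g(1)] .
      have e: "x \<otimes> h \<otimes> inv x = (x \<otimes> g \<otimes> inv x) [^] k"
        using g gc x conj_pow by simp
      have "(x \<otimes> g \<otimes> inv x) [^] k \<in> Hs" unfolding Hs_def using cj[OF x g(1)] by auto
      then show ?case unfolding e by (rule generate.incl)
    next
      case (inv h)
      then obtain g where g: "g \<in> S" "h = g [^] k" unfolding Hs_def by auto
      have gc: "g \<in> carrier G" using subgroup.mem_carrier[OF sub g(1)] .
      have e: "x \<otimes> inv h \<otimes> inv x = inv ((x \<otimes> g \<otimes> inv x) [^] k)"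
        using g gc x by (subst conj_pow[OF x gc]) (simp add: inv_mult_group m_assoc)
      have "(x \<otimes> g \<otimes> inv x) [^] k \<in> Hs" unfolding Hs_def using cj[OF x g(1)] by auto
      then show ?case unfolding e by (rule generate.inv)
    next
      case (eng h1 h2)
      have c1: "h1 \<in> carrier G" "h2 \<in> carrier G" using eng.hyps generate_in_carrier[OF Hc] by auto
      have e: "x \<otimes> (h1 \<otimes> h2) \<otimes> inv x = (x \<otimes> h1 \<otimes> inv x) \<otimes> (x \<otimes> h2 \<otimes> inv x)"
        using c1 x by (simp add: m_assoc inv_cancel_l)
      show ?case unfolding e by (rule generate.eng[OF eng.IH])
    qed
  qed
qed


lemma rep_val:
  assumes "subgroup N G" "x \<in> carrier G" "\<And>n. n \<in> N \<Longrightarrow> h (n \<otimes> x) = h x"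
  shows "h (SOME z. z \<in> N #> x) = h x"
proof -
  have "x \<in> N #> x" using rcos_self[OF assms(2,1)] .
  then have "(SOME z. z \<in> N #> x) \<in> N #> x" by (rule someI)
  then obtain n where "n \<in> N" "(SOME z. z \<in> N #> x) = n \<otimes> x" unfolding r_coset_def by blast
  then show ?thesis using assms(3) by simp
qed

lemma rep_coset:
  assumes "subgroup N G" "x \<in> carrier G"
  shows "N #> (SOME z. z \<in> N #> x) = N #> x"
proof -
  have "x \<in> N #> x" using rcos_self[OF assms(2,1)] .
  then have "(SOME z. z \<in> N #> x) \<in> N #> x" by (rule someI)
  then show ?thesis using repr_independence[OF _ assms(2,1)] by metis
qed

lemma H1_kills_Xpow:
  assumes "f \<in> H1 G" "even k" "S \<subseteq> carrier G" "n \<in> Xpow G k S"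
  shows "f n = False"
proof -
  have Hc: "{h [^] k | h. h \<in> S} \<subseteq> carrier G" using assms(3) by auto
  from assms(4) show ?thesis unfolding Xpow_def
  proof (induction rule: generate.induct)
    case one then show ?case using H1_one[OF assms(1)] .
  next
    case (incl h) then obtain g where "g \<in> S" "h = g [^] k" by auto
    then show ?case using H1_pow[OF assms(1)] assms(2,3) by auto
  next
    case (inv h) then obtain g where "g \<in> S" "h = g [^] k" by auto
    then show ?case using H1_pow[OF assms(1)] H1_inv[OF assms(1)] assms(2,3) by auto
  next
    case (eng h1 h2)
    then show ?case using H1_hom[OF assms(1)] generate_in_carrier[OF Hc] by simp
  qed
qed

lemma H1_bij:
  assumes "N \<lhd> G" "\<forall>f\<in>H1 G. \<forall>n\<in>N. f n = False"
  shows "bij_betw (infl G N) (H1 (G Mod N)) (H1 G)"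
proof -
  interpret N: normal N G by fact
  have sub: "subgroup N G" by (rule N.subgroup_axioms)
  have car: "carrier (G Mod N) = (\<lambda>x. N #> x) ` carrier G" by (rule carrier_FactGroup)
  define g where "g h = restrict (\<lambda>A. h (SOME z. z \<in> A)) (carrier (G Mod N))" for h :: "'a \<Rightarrow> bool"
  have cst: "h (SOME z. z \<in> N #> x) = h x" if "h \<in> H1 G" "x \<in> carrier G" for h x
    by (rule rep_val[OF sub that(2)]) (use H1_hom[OF that(1)] assms(2) that sub subgroup.mem_carrier in auto)
  show ?thesis
  proof (rule bij_betw_byWitness[where f'=g])
    show "\<forall>a\<in>H1 (G Mod N). g (infl G N a) = a"
    proof
      fix f assume f: "f \<in> H1 (G Mod N)"
      show "g (infl G N f) = f"
      proof (rule extensionalityI[where A="carrier (G Mod N)"])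
        show "g (infl G N f) \<in> extensional (carrier (G Mod N))" unfolding g_def by simp
        show "f \<in> extensional (carrier (G Mod N))" using f by (simp add: H1_def)
        fix A assume "A \<in> carrier (G Mod N)"
        then obtain x where x: "x \<in> carrier G" "A = N #> x" using car by auto
        have "(SOME z. z \<in> N #> x) \<in> carrier G"
          using someI[where P="\<lambda>z. z \<in> N #> x", OF rcos_self[OF x(1) sub]] N.elemrcos_carrier[OF is_group x(1)] by blast
        then show "g (infl G N f) A = f A"
          using x rep_coset[OF sub x(1)] \<open>A \<in> carrier (G Mod N)\<close> by (simp add: g_def infl_def)
      qed
    qed
    show "\<forall>h\<in>H1 G. infl G N (g h) = h"
    proof
      fix h assume h: "h \<in> H1 G"
      show "infl G N (g h) = h"
      proof (rule extensionalityI[where A="carrier G"])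
        show "infl G N (g h) \<in> extensional (carrier G)" unfolding infl_def by simp
        show "h \<in> extensional (carrier G)" using h by (simp add: H1_def)
        fix x assume x: "x \<in> carrier G"
        then have "N #> x \<in> carrier (G Mod N)" using car by auto
        then show "infl G N (g h) x = h x" using x cst[OF h x] by (simp add: g_def infl_def)
      qed
    qed
    show "infl G N ` H1 (G Mod N) \<subseteq> H1 G"
    proof
      fix h assume "h \<in> infl G N ` H1 (G Mod N)"
      then obtain f where f: "f \<in> H1 (G Mod N)" "h = infl G N f" by auto
      have "f (N #> (x \<otimes> y)) = (f (N #> x) \<noteq> f (N #> y))" if "x \<in> carrier G" "y \<in> carrier G" for x y
      proof -
        have "N #> x \<in> carrier (G Mod N)" "N #> y \<in> carrier (G Mod N)" using car that by auto
        then have "f ((N #> x) <#> (N #> y)) = (f (N #> x) \<noteq> f (N #> y))"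
          using f(1) unfolding H1_def by simp
        then show ?thesis using N.rcos_sum[OF that] by simp
      qed
      then show "h \<in> H1 G" using f(2) by (simp add: H1_def infl_def)
    qed
    show "g ` H1 G \<subseteq> H1 (G Mod N)"
    proof
      fix f assume "f \<in> g ` H1 G"
      then obtain h where h: "h \<in> H1 G" "f = g h" by auto
      have "g h (A <#> B) = (g h A \<noteq> g h B)" if hA: "A \<in> carrier (G Mod N)" and hB: "B \<in> carrier (G Mod N)" for A B
      proof -
        obtain x where x: "x \<in> carrier G" "A = N #> x" using car hA by auto
        obtain y where y: "y \<in> carrier G" "B = N #> y" using car hB by auto
        have AB: "A <#> B = N #> (x \<otimes> y)" using x y N.rcos_sum by simp
        have "A <#> B \<in> carrier (G Mod N)" using AB car x y by auto
        then show ?thesis using hA hB x y AB cst[OF h(1)] H1_hom[OF h(1)] by (simp add: g_def)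
      qed
      then show "f \<in> H1 (G Mod N)" using h(2) by (simp add: H1_def g_def)
    qed
  qed
qed


lemma cob_equiv:
  assumes S: "S \<lhd> G" and Ndef: "N = Xpow G 2 S"
    and cS: "\<forall>s\<in>S. \<forall>y\<in>carrier G. c s y = False"
    and cc: "\<forall>x\<in>carrier G. \<forall>y\<in>carrier G. c' (N #> x) (N #> y) = c x y"
  shows "coboundary2 G c \<longleftrightarrow> coboundary2 (G Mod N) c'"
proof -
  have Nn: "N \<lhd> G" unfolding Ndef by (rule Xpow_normal[OF S])
  interpret N: normal N G by (rule Nn)
  have sub: "subgroup N G" by (rule N.subgroup_axioms)
  have subS: "subgroup S G" using S normal_imp_subgroup by blast
  have NS: "N \<subseteq> S" unfolding Ndef by (rule Xpow_sub[OF subS])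
  have Sc: "S \<subseteq> carrier G" using subS subgroup.subset by blast
  have car: "carrier (G Mod N) = (\<lambda>x. N #> x) ` carrier G" by (rule carrier_FactGroup)
  show ?thesis
  proof
    assume "coboundary2 G c"
    then obtain f where f: "\<forall>x\<in>carrier G. \<forall>y\<in>carrier G. c x y = ((f x \<noteq> f y) \<noteq> f (x \<otimes> y))"
      unfolding coboundary2_def by blast
    have fS: "f (s \<otimes> y) = (f s \<noteq> f y)" if "s \<in> S" "y \<in> carrier G" for s y
    proof -
      have sc: "s \<in> carrier G" using that(1) Sc by auto
      show ?thesis using f[rule_format, OF sc that(2)] cS[rule_format, OF that] by simp
    qed
    have f1: "f \<one> = False" using fS[of \<one> \<one>] subgroup.one_closed[OF subS] by auto
    have Hc: "{h [^] (2::nat) | h. h \<in> S} \<subseteq> carrier G" using Sc by auto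
    have sq: "f (g [^] (2::nat)) = False" if "g \<in> S" for g
    proof -
      have gc: "g \<in> carrier G" using that Sc by auto
      have "g [^] (2::nat) = g \<otimes> g" using gc by (simp add: numeral_2_eq_2)
      then show ?thesis using fS[of g g] that Sc by auto
    qed
    have fN: "f n = False" if "n \<in> N" for n
      using that unfolding Ndef Xpow_def
    proof (induction rule: generate.induct)
      case one then show ?case by (rule f1)
    next
      case (incl h) then obtain g where "g \<in> S" "h = g [^] (2::nat)" by auto
      then show ?case using sq by simp
    next
      case (inv h) then obtain g where g: "g \<in> S" "h = g [^] (2::nat)" by auto
      then have hS: "h \<in> S" using sub_pow[OF subS] by simp
      have hc: "h \<in> carrier G" using hS Sc by auto
      have "f (h \<otimes> inv h) = (f h \<noteq> f (inv h))" using fS[OF hS, of "inv h"] hc by simp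
      then show ?case using f1 hc sq g by simp
    next
      case (eng h1 h2)
      have "h1 \<in> S" using eng.hyps(1) NS unfolding Ndef Xpow_def by auto
      moreover have "h2 \<in> carrier G" using eng.hyps(2) generate_in_carrier[OF Hc] by auto
      ultimately show ?case using fS eng.IH by simp
    qed
    have cst: "f (SOME z. z \<in> N #> x) = f x" if "x \<in> carrier G" for x
      by (rule rep_val[OF sub that]) (use fS fN NS that in auto)
    show "coboundary2 (G Mod N) c'"
      unfolding coboundary2_def
    proof (rule exI[where x="\<lambda>A. f (SOME z. z \<in> A)"], intro ballI)
      fix A B assume hA: "A \<in> carrier (G Mod N)" and hB: "B \<in> carrier (G Mod N)"
      obtain x where x: "x \<in> carrier G" "A = N #> x" using car hA by auto
      obtain y where y: "y \<in> carrier G" "B = N #> y" using car hB by auto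
      have AB: "A \<otimes>\<^bsub>G Mod N\<^esub> B = N #> (x \<otimes> y)" using x y N.rcos_sum by simp
      show "c' A B = ((f (SOME z. z \<in> A) \<noteq> f (SOME z. z \<in> B)) \<noteq> f (SOME z. z \<in> A \<otimes>\<^bsub>G Mod N\<^esub> B))"
        unfolding AB using cc[rule_format, OF x(1) y(1)] f[rule_format, OF x(1) y(1)] cst[OF x(1)] cst[OF y(1)] cst[OF m_closed[OF x(1) y(1)]] x(2) y(2) by simp
    qed
  next
    assume "coboundary2 (G Mod N) c'"
    then obtain f where f: "\<forall>A\<in>carrier (G Mod N). \<forall>B\<in>carrier (G Mod N). c' A B = ((f A \<noteq> f B) \<noteq> f (A \<otimes>\<^bsub>G Mod N\<^esub> B))"
      unfolding coboundary2_def by blast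
    show "coboundary2 G c"
      unfolding coboundary2_def
    proof (rule exI[where x="\<lambda>x. f (N #> x)"], intro ballI)
      fix x y assume x: "x \<in> carrier G" and y: "y \<in> carrier G"
      have m: "N #> x \<in> carrier (G Mod N)" "N #> y \<in> carrier (G Mod N)" using car x y by auto
      have AB: "(N #> x) \<otimes>\<^bsub>G Mod N\<^esub> (N #> y) = N #> (x \<otimes> y)" using x y N.rcos_sum by simp
      show "c x y = ((f (N #> x) \<noteq> f (N #> y)) \<noteq> f (N #> (x \<otimes> y)))"
        using f[rule_format, OF m] cc[rule_format, OF x y] AB by simp
    qed
  qed
qed

end


theorem lemma4:
  fixes G :: "('a, 'b) monoid_scheme" and \<rho> \<phi> \<psi> :: "'a \<Rightarrow> bool"
  assumes "group G"
    and "\<rho> \<in> H1 G" and "\<phi> \<in> H1 G" and "\<psi> \<in> H1 G"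
  defines "K \<equiv> ker1 G \<rho>"
  defines "L \<equiv> K \<inter> ker1 G \<phi>"
  shows "bij_betw (infl G (Xpow G 2 K)) (H1 (G Mod Xpow G 2 K)) (H1 G)
       \<and> bij_betw (infl G (Xpow G 2 L)) (H1 (G Mod Xpow G 2 L)) (H1 G)
       \<and> bij_betw (infl G (Xpow G 4 (carrier G))) (H1 (G Mod Xpow G 4 (carrier G))) (H1 G)
       \<and> (\<forall>\<rho>' \<phi>'. \<rho>' \<in> H1 (G Mod Xpow G 2 K) \<longrightarrow> \<phi>' \<in> H1 (G Mod Xpow G 2 K) \<longrightarrow>
            infl G (Xpow G 2 K) \<rho>' = \<rho> \<longrightarrow> infl G (Xpow G 2 K) \<phi>' = \<phi> \<longrightarrow>
            (H2_eq G (cup \<rho> \<phi>) (\<lambda>x y. False) \<longleftrightarrow>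
             H2_eq (G Mod Xpow G 2 K) (cup \<rho>' \<phi>') (\<lambda>x y. False)))
       \<and> (\<forall>\<rho>' \<phi>' \<psi>'. \<rho>' \<in> H1 (G Mod Xpow G 2 L) \<longrightarrow> \<phi>' \<in> H1 (G Mod Xpow G 2 L) \<longrightarrow>
            \<psi>' \<in> H1 (G Mod Xpow G 2 L) \<longrightarrow>
            infl G (Xpow G 2 L) \<rho>' = \<rho> \<longrightarrow> infl G (Xpow G 2 L) \<phi>' = \<phi> \<longrightarrow>
            infl G (Xpow G 2 L) \<psi>' = \<psi> \<longrightarrow>
            (H2_eq G (cup \<phi> \<phi>) (add2 (cup \<rho> \<phi>) (cup \<rho> \<psi>)) \<longleftrightarrow>
             H2_eq (G Mod Xpow G 2 L) (cup \<phi>' \<phi>') (add2 (cup \<rho>' \<phi>') (cup \<rho>' \<psi>'))))"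
  proof -
  interpret G: group G by fact
  have Kn: "K \<lhd> G" unfolding K_def by (rule G.ker1_normal[OF assms(2)])
  have Ln: "L \<lhd> G" unfolding L_def
    by (rule G.normal_subgroup_intersect[OF Kn G.ker1_normal[OF assms(3)]])
  have Kc: "K \<subseteq> carrier G" by (simp add: K_def ker1_def)
  have Lc: "L \<subseteq> carrier G" by (auto simp add: L_def K_def ker1_def)
  have ev2: "even (2::nat)" and ev4: "even (4::nat)" by simp_all
  have infl_val: "f' (N #>\<^bsub>G\<^esub> x) = f x" if "infl G N f' = f" "x \<in> carrier G" for N f' f x
    using fun_cong[OF that(1), of x] that(2) by (simp add: infl_def)
  have b1: "bij_betw (infl G (Xpow G 2 K)) (H1 (G Mod Xpow G 2 K)) (H1 G)"
    by (rule G.H1_bij[OF G.Xpow_normal[OF Kn]]) (use G.H1_kills_Xpow[OF _ ev2 Kc] in blast)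
  have b2: "bij_betw (infl G (Xpow G 2 L)) (H1 (G Mod Xpow G 2 L)) (H1 G)"
    by (rule G.H1_bij[OF G.Xpow_normal[OF Ln]]) (use G.H1_kills_Xpow[OF _ ev2 Lc] in blast)
  have b3: "bij_betw (infl G (Xpow G 4 (carrier G))) (H1 (G Mod Xpow G 4 (carrier G))) (H1 G)"
    by (rule G.H1_bij[OF G.Xpow_normal[OF G.normal_self]]) (use G.H1_kills_Xpow[OF _ ev4 subset_refl] in blast)
  have p3: "\<forall>\<rho>' \<phi>'. \<rho>' \<in> H1 (G Mod Xpow G 2 K) \<longrightarrow> \<phi>' \<in> H1 (G Mod Xpow G 2 K) \<longrightarrow>
            infl G (Xpow G 2 K) \<rho>' = \<rho> \<longrightarrow> infl G (Xpow G 2 K) \<phi>' = \<phi> \<longrightarrow>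
            (H2_eq G (cup \<rho> \<phi>) (\<lambda>x y. False) \<longleftrightarrow>
             H2_eq (G Mod Xpow G 2 K) (cup \<rho>' \<phi>') (\<lambda>x y. False))"
  proof (intro allI impI)
    fix \<rho>' \<phi>' assume "\<rho>' \<in> H1 (G Mod Xpow G 2 K)" "\<phi>' \<in> H1 (G Mod Xpow G 2 K)"
      and r: "infl G (Xpow G 2 K) \<rho>' = \<rho>" and p: "infl G (Xpow G 2 K) \<phi>' = \<phi>"
    show "H2_eq G (cup \<rho> \<phi>) (\<lambda>x y. False) \<longleftrightarrow>
             H2_eq (G Mod Xpow G 2 K) (cup \<rho>' \<phi>') (\<lambda>x y. False)"
      unfolding H2_eq_def
      apply (rule G.cob_equiv[OF Kn refl])
       apply (simp add: add2_def cup_def K_def ker1_def)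
      apply (simp add: add2_def cup_def infl_val[OF r] infl_val[OF p])
      done
  qed
  have p4: "\<forall>\<rho>' \<phi>' \<psi>'. \<rho>' \<in> H1 (G Mod Xpow G 2 L) \<longrightarrow> \<phi>' \<in> H1 (G Mod Xpow G 2 L) \<longrightarrow>
            \<psi>' \<in> H1 (G Mod Xpow G 2 L) \<longrightarrow>
            infl G (Xpow G 2 L) \<rho>' = \<rho> \<longrightarrow> infl G (Xpow G 2 L) \<phi>' = \<phi> \<longrightarrow>
            infl G (Xpow G 2 L) \<psi>' = \<psi> \<longrightarrow>
            (H2_eq G (cup \<phi> \<phi>) (add2 (cup \<rho> \<phi>) (cup \<rho> \<psi>)) \<longleftrightarrow>
             H2_eq (G Mod Xpow G 2 L) (cup \<phi>' \<phi>') (add2 (cup \<rho>' \<phi>') (cup \<rho>' \<psi>')))"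
  proof (intro allI impI)
    fix \<rho>' \<phi>' \<psi>'
    assume r: "infl G (Xpow G 2 L) \<rho>' = \<rho>" and p: "infl G (Xpow G 2 L) \<phi>' = \<phi>"
      and q: "infl G (Xpow G 2 L) \<psi>' = \<psi>"
    show "H2_eq G (cup \<phi> \<phi>) (add2 (cup \<rho> \<phi>) (cup \<rho> \<psi>)) \<longleftrightarrow>
             H2_eq (G Mod Xpow G 2 L) (cup \<phi>' \<phi>') (add2 (cup \<rho>' \<phi>') (cup \<rho>' \<psi>'))"
      unfolding H2_eq_def
      apply (rule G.cob_equiv[OF Ln refl])
       apply (simp add: add2_def cup_def L_def K_def ker1_def)
      apply (simp add: add2_def cup_def infl_val[OF r] infl_val[OF p] infl_val[OF q])
      done
  qed
  show ?thesis using b1 b2 b3 p3 p4 by blast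
qed

end
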